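(* The eight functions $q^{Z_i},q^{Z_j},q^{Z_k},h_1,h_2,k,f^{X_i},f^{X_j}$ on $TN$ defined below are (i) functionally independent, i.e. $dq^{Z_i}\wedge dq^{Z_j}\wedge dq^{Z_k}\wedge dh_1\wedge dh_2\wedge dk\wedge df^{X_i}\wedge df^{X_j}\neq0$ on an open dense subset of $TN$, and (ii) pairwise Poisson commute with respect to the symplectic form on $TN$ obtained from the canonical symplectic form on $T^*N$ via the identification $TN\cong T^*N$ induced by $g$.
   Context: Let $\mathfrak v$ have orthonormal basis $X_i,X_j,Y_i,Y_j,Y_k$, $\mathfrak z$ orthonormal basis $Z_i,Z_j,Z_k$, $\mathfrak n=\mathfrak v\oplus\mathfrak z$ orthogonal, with two-step nilpotent bracket ($\mathfrak z$ central, $[\mathfrak v,\mathfrak v]\subseteq\mathfrak z$) whose only nonzero basis brackets up to antisymmetry are $[X_i,Y_j]=Z_k$, $[X_i,Y_k]=-Z_j$, $[X_j,Y_i]=-Z_k$, $[X_j,Y_k]=Z_i$. $N$ is the simply connected Lie group with Lie algebra $\mathfrak n$, $g$ the left invariant metric from the inner product. Elements of $N$ are written $(v,z):=\exp(v+z)$; $TN$ is identified with $N\times\mathfrak n$ via left translation. Two functions $f,h$ Poisson commute if $\omega(X_f,X_h)=0$, where $df=\omega(\cdot,X_f)$. Let $\mathfrak x=\mathrm{span}\{X_i,X_j\}$, $\mathfrak y=\mathrm{span}\{Y_i,Y_j,Y_k\}$, $V_{\mathfrak x},V_{\mathfrak y}$ components of $V\in\mathfrak v$. For $Z=Z_c=c_iZ_i+c_jZ_j+c_kZ_k$: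 $E_1(Z)=c_iX_i+c_jX_j$, $E_2(Z)=-c_jY_i+c_iY_j$, $E_3(Z)=|c|(c_jX_i-c_iX_j)$, $E_4(Z)=c_k(c_iY_i+c_jY_j)-(c_i^2+c_j^2)Y_k$, $Y(Z)=c_iY_i+c_jY_j+c_kY_k$; for $c_k\neq0$, $C(Z):\mathfrak y\to\mathfrak x$ has matrix $(c_k|c|^2)^{-1}\begin{pmatrix}-c_ic_j & c_i^2+c_k^2 & -c_jc_k\\ -c_j^2-c_k^2 & c_ic_j & c_ic_k\end{pmatrix}$ w.r.t. $(Y_i,Y_j,Y_k)$, $(X_i,X_j)$; $\phi(x)=e^{-1/x^2}$ ($\phi(0)=0$), $\Phi(Z_c)=\phi(c_k|c|^2)$. At $((v,z),V+Z)$: $q^W=\langle Z,W\rangle$ ($W\in\{Z_i,Z_j,Z_k\}$), $h_1=\langle V,E_1(Z)\rangle^2+\langle V,E_2(Z)\rangle^2$, $h_2=\langle V,E_3(Z)\rangle^2+\langle V,E_4(Z)\rangle^2$, $k=\langle V,Y(Z)\rangle$, and $f^X$ ($X\in\{X_i,X_j\}$) equals $0$ if $c_k=0$ and $\Phi(Z)\sin(2\pi\langle X,v_{\mathfrak x}-C(Z)V_{\mathfrak y}\rangle)$ otherwise. *)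

theory Defs
  imports "HOL-Analysis.Analysis"
begin

text \<open>The Lie algebra n is modelled as real^idx with its standard inner product,
  for which the basis vectors (axis b 1) are orthonormal.\<close>

datatype idx = Xi | Xj | Yi | Yj | Yk | Zi | Zj | Zk

lemma UNIV_idx: "(UNIV :: idx set) = {Xi, Xj, Yi, Yj, Yk, Zi, Zj, Zk}"
  using idx.exhaust by auto

instance idx :: finite
  by standard (simp add: UNIV_idx)

type_synonym nvec = "real ^ idx"

definition bv :: "idx \<Rightarrow> nvec" where
  "bv b = axis b 1"

definition xproj :: "nvec \<Rightarrow> nvec" where
  "xproj U = (\<chi> b. if b \<in> {Xi, Xj} then U $ b else 0)"
definition yproj :: "nvec \<Rightarrow> nvec" where
  "yproj U = (\<chi> b. if b \<in> {Yi, Yj, Yk} then U $ b else 0)"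
definition vproj :: "nvec \<Rightarrow> nvec" where
  "vproj U = (\<chi> b. if b \<in> {Xi, Xj, Yi, Yj, Yk} then U $ b else 0)"
definition zproj :: "nvec \<Rightarrow> nvec" where
  "zproj U = (\<chi> b. if b \<in> {Zi, Zj, Zk} then U $ b else 0)"

text \<open>The Lie bracket: bilinear, antisymmetric, z central, [v,v] in z, with
  [X_i,Y_j]=Z_k, [X_i,Y_k]=-Z_j, [X_j,Y_i]=-Z_k, [X_j,Y_k]=Z_i and all other
  basis brackets (up to antisymmetry) zero.\<close>

definition brk :: "nvec \<Rightarrow> nvec \<Rightarrow> nvec" where
  "brk a b = (\<chi> l. (case l of
       Zi \<Rightarrow> a$Xj * b$Yk - a$Yk * b$Xj
     | Zj \<Rightarrow> - (a$Xi * b$Yk - a$Yk * b$Xi)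
     | Zk \<Rightarrow> (a$Xi * b$Yj - a$Yj * b$Xi) - (a$Xj * b$Yi - a$Yi * b$Xj)
     | _ \<Rightarrow> 0))"

text \<open>An element exp(w) of N (w = v + z in n) is represented by w. For a two-step
  nilpotent group, exp(a) exp(b) = exp(a + b + 1/2 [a,b]).\<close>

definition mult :: "nvec \<Rightarrow> nvec \<Rightarrow> nvec" where
  "mult a b = a + b + (1/2) *\<^sub>R brk a b"

text \<open>Differential at the identity of left translation by w: it sends the
  left-invariant vector U in n to the coordinate tangent vector at w.
  (Justified by the lemma below.)  TN is identified with N x n via this map.\<close>

definition ltr :: "nvec \<Rightarrow> nvec \<Rightarrow> nvec" where
  "ltr w U = U + (1/2) *\<^sub>R brk w U"

lemma linear_brk_left: "linear (brk w)"
  by (rule linearI) (auto simp: brk_def vec_eq_iff algebra_simps split: idx.splits)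

lemma linear_ltr: "linear (ltr w)"
  unfolding ltr_def
  by (intro linear_compose_add linear_ident linear_compose_scale_right linear_brk_left)

lemma mult_has_derivative_ltr: "(mult w has_derivative ltr w) (at 0)"
proof -
  have "mult w = (\<lambda>h. w + ltr w h)"
    by (auto simp: mult_def ltr_def fun_eq_iff)
  moreover have "((\<lambda>h. w + ltr w h) has_derivative ltr w) (at 0)"
    using linear_ltr[of w]
    by (auto intro!: derivative_eq_intros simp: linear_imp_has_derivative)
  ultimately show ?thesis by simp
qed

text \<open>A point ((v,z), V+Z) of TN is a pair (w, U) of elements of n, where w = v + z
  gives the base point exp(w) and U = V + Z is the left-trivialised tangent vector.
  Z = c_i Z_i + c_j Z_j + c_k Z_k.\<close>

type_synonym tpt = "nvec \<times> nvec"

definition ncz :: "nvec \<Rightarrow> real" where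
  "ncz Z = sqrt ((Z$Zi)^2 + (Z$Zj)^2 + (Z$Zk)^2)"

definition E1 :: "nvec \<Rightarrow> nvec" where
  "E1 Z = (Z$Zi) *\<^sub>R bv Xi + (Z$Zj) *\<^sub>R bv Xj"
definition E2 :: "nvec \<Rightarrow> nvec" where
  "E2 Z = (- Z$Zj) *\<^sub>R bv Yi + (Z$Zi) *\<^sub>R bv Yj"
definition E3 :: "nvec \<Rightarrow> nvec" where
  "E3 Z = ncz Z *\<^sub>R ((Z$Zj) *\<^sub>R bv Xi - (Z$Zi) *\<^sub>R bv Xj)"
definition E4 :: "nvec \<Rightarrow> nvec" where
  "E4 Z = (Z$Zk) *\<^sub>R ((Z$Zi) *\<^sub>R bv Yi + (Z$Zj) *\<^sub>R bv Yj)
          - ((Z$Zi)^2 + (Z$Zj)^2) *\<^sub>R bv Yk"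
definition YZ :: "nvec \<Rightarrow> nvec" where
  "YZ Z = (Z$Zi) *\<^sub>R bv Yi + (Z$Zj) *\<^sub>R bv Yj + (Z$Zk) *\<^sub>R bv Yk"

text \<open>C(Z) : y \<rightarrow> x (for c_k \<noteq> 0), given by its matrix w.r.t. (Y_i,Y_j,Y_k), (X_i,X_j).\<close>

definition CZ :: "nvec \<Rightarrow> nvec \<Rightarrow> nvec" where
  "CZ Z Y = (let ci = Z$Zi; cj = Z$Zj; ck = Z$Zk; d = ck * (ncz Z)^2 in
      (((- (ci * cj)) * Y$Yi + (ci^2 + ck^2) * Y$Yj + (- (cj * ck)) * Y$Yk) / d) *\<^sub>R bv Xi
    + (((- (cj^2) - ck^2) * Y$Yi + (ci * cj) * Y$Yj + (ci * ck) * Y$Yk) / d) *\<^sub>R bv Xj)"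

definition phi :: "real \<Rightarrow> real" where
  "phi x = (if x = 0 then 0 else exp (- 1 / x^2))"

definition PhiZ :: "nvec \<Rightarrow> real" where
  "PhiZ Z = phi ((Z$Zk) * (ncz Z)^2)"

definition qf :: "idx \<Rightarrow> tpt \<Rightarrow> real" where
  "qf W y = inner (zproj (snd y)) (bv W)"

definition h1 :: "tpt \<Rightarrow> real" where
  "h1 y = (let V = vproj (snd y); Z = zproj (snd y) in
     (inner V (E1 Z))^2 + (inner V (E2 Z))^2)"

definition h2 :: "tpt \<Rightarrow> real" where
  "h2 y = (let V = vproj (snd y); Z = zproj (snd y) in
     (inner V (E3 Z))^2 + (inner V (E4 Z))^2)"

definition kf :: "tpt \<Rightarrow> real" where
  "kf y = (let V = vproj (snd y); Z = zproj (snd y) in inner V (YZ Z))"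

definition ff :: "idx \<Rightarrow> tpt \<Rightarrow> real" where
  "ff X y = (let v = vproj (fst y); V = vproj (snd y); Z = zproj (snd y) in
     if Z$Zk = 0 then 0
     else PhiZ Z * sin (2 * pi * inner (bv X) (xproj v - CZ Z (yproj V))))"

datatype fidx = QZi | QZj | QZk | H1 | H2 | K | FXi | FXj

lemma UNIV_fidx: "(UNIV :: fidx set) = {QZi, QZj, QZk, H1, H2, K, FXi, FXj}"
  using fidx.exhaust by auto

instance fidx :: finite
  by standard (simp add: UNIV_fidx)

definition fam :: "fidx \<Rightarrow> tpt \<Rightarrow> real" where
  "fam a = (case a of QZi \<Rightarrow> qf Zi | QZj \<Rightarrow> qf Zj | QZk \<Rightarrow> qf Zk
     | H1 \<Rightarrow> h1 | H2 \<Rightarrow> h2 | K \<Rightarrow> kf | FXi \<Rightarrow> ff Xi | FXj \<Rightarrow> ff Xj)"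

text \<open>The wedge of the differentials df_a (a in the finite index set) is nonzero at y iff
  the f_a are differentiable at y with linearly independent differentials.\<close>

definition wedge_nonzero_at :: "('i::finite \<Rightarrow> 'x::real_normed_vector \<Rightarrow> real) \<Rightarrow> 'x \<Rightarrow> bool" where
  "wedge_nonzero_at f y \<longleftrightarrow> (\<exists>D. (\<forall>a. (f a has_derivative D a) (at y)) \<and>
      (\<forall>c. (\<forall>u. (\<Sum>a\<in>UNIV. c a * D a u) = 0) \<longrightarrow> (\<forall>a. c a = 0)))"

text \<open>T*N in the global coordinates w of N: pairs (x, p) with p the covector
  \<eta> \<mapsto> p \<bullet> \<eta>. Canonical symplectic form \<omega> = \<Sum> dx^a \<and> dp_a.\<close>

definition omega :: "tpt \<Rightarrow> tpt \<Rightarrow> real" where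
  "omega u u' = inner (fst u) (snd u') - inner (fst u') (snd u)"

text \<open>Left-invariant metric: g_x(\<xi>,\<eta>) = <U, U'> where \<xi> = ltr x U, \<eta> = ltr x U'.
  The Legendre map TN \<rightarrow> T*N sends (x, U) to (x, p) with p \<bullet> (ltr x U') = U \<bullet> U' for all U';
  its inverse is (x, p) \<mapsto> (x, adjoint (ltr x) p).\<close>

definition leg_inv :: "tpt \<Rightarrow> tpt" where
  "leg_inv y = (fst y, adjoint (ltr (fst y)) (snd y))"

text \<open>Functions on TN Poisson commute for the pulled-back form iff their transports to
  T*N by the inverse Legendre map do.\<close>

definition poisson_commute :: "(tpt \<Rightarrow> real) \<Rightarrow> (tpt \<Rightarrow> real) \<Rightarrow> bool" where
  "poisson_commute F G \<longleftrightarrow> (\<forall>y. \<exists>DF DG XF XG.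
      (F has_derivative DF) (at y) \<and> (G has_derivative DG) (at y) \<and>
      (\<forall>u. DF u = omega u XF) \<and> (\<forall>u. DG u = omega u XG) \<and>
      omega XF XG = 0)"

definition poisson_commute_TN :: "(tpt \<Rightarrow> real) \<Rightarrow> (tpt \<Rightarrow> real) \<Rightarrow> bool" where
  "poisson_commute_TN f h \<longleftrightarrow> poisson_commute (f \<circ> leg_inv) (h \<circ> leg_inv)"

end

theory Submission
  imports Defs
begin

lemma inner_nvec: "inner (a::nvec) b = a$Xi*b$Xi + a$Xj*b$Xj + a$Yi*b$Yi + a$Yj*b$Yj + a$Yk*b$Yk + a$Zi*b$Zi + a$Zj*b$Zj + a$Zk*b$Zk"
  by (simp add: inner_vec_def UNIV_idx)

lemma bv_nth[simp]: "bv a $ b = (if a = b then 1 else 0)"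
  by (simp add: bv_def axis_def)

definition Aexp :: "nvec \<Rightarrow> nvec \<Rightarrow> nvec" where
 "Aexp x p = (\<chi> b. case b of Xi \<Rightarrow> p$Zj * x$Yk - p$Zk * x$Yj | Xj \<Rightarrow> p$Zk * x$Yi - p$Zi * x$Yk
   | Yi \<Rightarrow> - (p$Zk * x$Xj) | Yj \<Rightarrow> p$Zk * x$Xi | Yk \<Rightarrow> p$Zi * x$Xj - p$Zj * x$Xi | _ \<Rightarrow> 0)"

lemma adj_ltr: "adjoint (ltr x) p = p + (1/2) *\<^sub>R Aexp x p"
proof -
  have "adjoint (ltr x) = (\<lambda>p. p + (1/2) *\<^sub>R Aexp x p)"
    by (rule adjoint_unique) (simp add: inner_nvec ltr_def brk_def Aexp_def algebra_simps)
  then show ?thesis by simp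
qed

lemma Aexp_sum: "Aexp x p = (p$Zj * x$Yk - p$Zk * x$Yj) *\<^sub>R bv Xi + (p$Zk * x$Yi - p$Zi * x$Yk) *\<^sub>R bv Xj
   + (- (p$Zk * x$Xj)) *\<^sub>R bv Yi + (p$Zk * x$Xi) *\<^sub>R bv Yj + (p$Zi * x$Xj - p$Zj * x$Xi) *\<^sub>R bv Yk"
  by (simp add: Aexp_def vec_eq_iff split: idx.splits)

lemma nth_deriv[derivative_intros]: "(f has_derivative f') F \<Longrightarrow> ((\<lambda>x. f x $ b) has_derivative (\<lambda>x. f' x $ b)) F"
  by (rule bounded_linear.has_derivative[OF bounded_linear_vec_nth])

lemma leg_inv_deriv:
  "(leg_inv has_derivative (\<lambda>u. (fst u, snd u + (1/2) *\<^sub>R (Aexp (fst u) p + Aexp x (snd u))))) (at (x,p))"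
proof -
  have e: "leg_inv = (\<lambda>y. (fst y, snd y + (1/2) *\<^sub>R Aexp (fst y) (snd y)))"
    by (auto simp: leg_inv_def adj_ltr fun_eq_iff)
  show ?thesis unfolding e Aexp_sum
    apply (rule derivative_eq_intros refl | simp)+
    apply (simp add: fun_eq_iff vec_eq_iff split: idx.split)
    done
qed


lemma inner_bv[simp]: "inner (v::nvec) (bv i) = v $ i" "inner (bv i) v = v $ i"
  by (simp_all add: bv_def inner_axis inner_axis')

lemma Aexp_zero[simp]: "Aexp x 0 = 0" "Aexp 0 p = 0"
  by (simp_all add: Aexp_def vec_eq_iff split: idx.split)

definition gw :: "(tpt \<Rightarrow> real) \<Rightarrow> nvec" where "gw D = (\<chi> b. D (bv b, 0))"
definition gu :: "(tpt \<Rightarrow> real) \<Rightarrow> nvec" where "gu D = (\<chi> b. D (0, bv b))"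

lemma rep: assumes "linear D" shows "D u = inner (gw D) (fst u) + inner (gu D) (snd u)"
proof -
  have e: "u = (\<Sum>b\<in>UNIV. (fst u $ b) *\<^sub>R (bv b, 0::nvec)) + (\<Sum>b\<in>UNIV. (snd u $ b) *\<^sub>R (0::nvec, bv b))"
    apply (simp add: prod_eq_iff vec_eq_iff UNIV_idx)
    apply (intro conjI allI impI; case_tac i; simp)
    done
  have s1: "\<And>c v. D (c *\<^sub>R v, 0) = c * D (v, 0)" using linear_scale[OF assms] by (metis scaleR_Pair scaleR_zero_right real_scaleR_def)
  have s2: "\<And>c v. D (0, c *\<^sub>R v) = c * D (0, v)" using linear_scale[OF assms] by (metis scaleR_Pair scaleR_zero_right real_scaleR_def)
  have "D u = (\<Sum>b\<in>UNIV. (fst u $ b) * D (bv b, 0)) + (\<Sum>b\<in>UNIV. (snd u $ b) * D (0, bv b))"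
    by (subst e) (simp add: linear_add[OF assms] linear_sum[OF assms] linear_scale[OF assms] s1 s2 del: scaleR_Pair)
  then show ?thesis by (simp add: gw_def gu_def inner_vec_def mult.commute)
qed

lemma alg_pb:
  fixes fw gw a c x p :: nvec
  assumes "fw$Zi = 0" "fw$Zj = 0" "fw$Zk = 0" "gw$Zi = 0" "gw$Zj = 0" "gw$Zk = 0"
  shows "inner (- (\<chi> b. a$b + inner a ((1/2) *\<^sub>R Aexp x (bv b)))) (\<chi> b. gw$b + inner c ((1/2) *\<^sub>R Aexp (bv b) p))
       - inner (- (\<chi> b. c$b + inner c ((1/2) *\<^sub>R Aexp x (bv b)))) (\<chi> b. fw$b + inner a ((1/2) *\<^sub>R Aexp (bv b) p))
     = inner c fw - inner a gw - inner (p + (1/2) *\<^sub>R Aexp x p) (brk a c)"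
  using assms by (simp add: inner_nvec Aexp_def brk_def algebra_simps)

lemma pc_general:
  assumes dF: "\<And>y. (F has_derivative DF y) (at y)" and dG: "\<And>y. (G has_derivative DG y) (at y)"
  and zF: "\<And>y. gw (DF y) $ Zi = 0 \<and> gw (DF y) $ Zj = 0 \<and> gw (DF y) $ Zk = 0"
  and zG: "\<And>y. gw (DG y) $ Zi = 0 \<and> gw (DG y) $ Zj = 0 \<and> gw (DG y) $ Zk = 0"
  and br: "\<And>y. inner (gu (DG y)) (gw (DF y)) - inner (gu (DF y)) (gw (DG y)) - inner (snd y) (brk (gu (DF y)) (gu (DG y))) = 0"
  shows "poisson_commute_TN F G"
  unfolding poisson_commute_TN_def poisson_commute_def
proof
  fix y :: tpt
  obtain x p where y: "y = (x,p)" by fastforce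
  define yy where "yy = leg_inv (x,p)"
  have yy: "yy = (x, p + (1/2) *\<^sub>R Aexp x p)" by (simp add: yy_def leg_inv_def adj_ltr)
  define L where "L = (\<lambda>u::tpt. (fst u, snd u + (1/2) *\<^sub>R (Aexp (fst u) p + Aexp x (snd u))))"
  have dL: "(leg_inv has_derivative L) (at (x,p))" unfolding L_def by (rule leg_inv_deriv)
  define DLF where "DLF = (\<lambda>u. DF yy (L u))"
  define DLG where "DLG = (\<lambda>u. DG yy (L u))"
  have hF: "((F \<circ> leg_inv) has_derivative DLF) (at y)"
    unfolding y DLF_def yy_def o_def by (rule has_derivative_compose[OF dL dF])
  have hG: "((G \<circ> leg_inv) has_derivative DLG) (at y)"
    unfolding y DLG_def yy_def o_def by (rule has_derivative_compose[OF dL dG])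
  have linF: "linear DLF" using hF has_derivative_linear by blast
  have linG: "linear DLG" using hG has_derivative_linear by blast
  have linF0: "linear (DF yy)" using dF has_derivative_linear by blast
  have linG0: "linear (DG yy)" using dG has_derivative_linear by blast
  define XF where "XF = (- gu DLF, gw DLF)"
  define XG where "XG = (- gu DLG, gw DLG)"
  have oF: "\<forall>u. DLF u = omega u XF"
    using rep[OF linF] by (simp add: omega_def XF_def inner_commute)
  have oG: "\<forall>u. DLG u = omega u XG"
    using rep[OF linG] by (simp add: omega_def XG_def inner_commute)
  have gwF: "gw DLF = (\<chi> b. gw (DF yy)$b + inner (gu (DF yy)) ((1/2) *\<^sub>R Aexp (bv b) p))"
    unfolding gw_def[of DLF] DLF_def L_def
    apply (subst rep[OF linF0])
    apply (simp add: vec_eq_iff gw_def inner_add_right)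
    done
  have guF: "gu DLF = (\<chi> b. gu (DF yy)$b + inner (gu (DF yy)) ((1/2) *\<^sub>R Aexp x (bv b)))"
    unfolding gu_def[of DLF] DLF_def L_def
    apply (subst rep[OF linF0])
    apply (simp add: vec_eq_iff gu_def inner_add_right)
    done
  have gwG: "gw DLG = (\<chi> b. gw (DG yy)$b + inner (gu (DG yy)) ((1/2) *\<^sub>R Aexp (bv b) p))"
    unfolding gw_def[of DLG] DLG_def L_def
    apply (subst rep[OF linG0])
    apply (simp add: vec_eq_iff gw_def inner_add_right)
    done
  have guG: "gu DLG = (\<chi> b. gu (DG yy)$b + inner (gu (DG yy)) ((1/2) *\<^sub>R Aexp x (bv b)))"
    unfolding gu_def[of DLG] DLG_def L_def
    apply (subst rep[OF linG0])
    apply (simp add: vec_eq_iff gu_def inner_add_right)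
    done
  have "omega XF XG = 0"
    unfolding omega_def XF_def XG_def fst_conv snd_conv gwF guF gwG guG
    apply (subst alg_pb)
    using zF[of yy] zG[of yy] br[of yy] by (auto simp: yy)
  then show "\<exists>DF DG XF XG. ((F \<circ> leg_inv) has_derivative DF) (at y) \<and> ((G \<circ> leg_inv) has_derivative DG) (at y) \<and>
      (\<forall>u. DF u = omega u XF) \<and> (\<forall>u. DG u = omega u XG) \<and> omega XF XG = 0"
    using hF hG oF oG by blast
qed

lemma vproj_nth[simp]: "vproj U $ b = (if b \<in> {Xi, Xj, Yi, Yj, Yk} then U $ b else 0)" by (simp add: vproj_def)
lemma zproj_nth[simp]: "zproj U $ b = (if b \<in> {Zi, Zj, Zk} then U $ b else 0)" by (simp add: zproj_def)
lemma xproj_nth[simp]: "xproj U $ b = (if b \<in> {Xi, Xj} then U $ b else 0)" by (simp add: xproj_def)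
lemma yproj_nth[simp]: "yproj U $ b = (if b \<in> {Yi, Yj, Yk} then U $ b else 0)" by (simp add: yproj_def)

lemma ncz_sq: "(ncz Z)^2 = (Z$Zi)^2 + (Z$Zj)^2 + (Z$Zk)^2"
  by (simp add: ncz_def)

lemma qf_eq: "qf W y = (if W \<in> {Zi,Zj,Zk} then snd y $ W else 0)"
  by (simp add: qf_def)

lemma h1_eq: "h1 y = (snd y$Xi * snd y$Zi + snd y$Xj * snd y$Zj)^2 + (snd y$Yj * snd y$Zi - snd y$Yi * snd y$Zj)^2"
  by (simp add: h1_def E1_def E2_def inner_nvec algebra_simps)

lemma h2_eq: "h2 y = ((snd y$Zi)^2 + (snd y$Zj)^2 + (snd y$Zk)^2) * (snd y$Xi * snd y$Zj - snd y$Xj * snd y$Zi)^2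
   + (snd y$Zk * (snd y$Yi * snd y$Zi + snd y$Yj * snd y$Zj) - ((snd y$Zi)^2 + (snd y$Zj)^2) * snd y$Yk)^2"
proof -
  have "h2 y = (ncz (zproj (snd y)))^2 * (snd y$Xi * snd y$Zj - snd y$Xj * snd y$Zi)^2
   + (snd y$Zk * (snd y$Yi * snd y$Zi + snd y$Yj * snd y$Zj) - ((snd y$Zi)^2 + (snd y$Zj)^2) * snd y$Yk)^2"
    unfolding h2_def E3_def E4_def Let_def inner_nvec
    apply (simp add: vproj_def zproj_def)
    apply (simp add: power_mult_distrib algebra_simps)
    apply (simp add: power2_eq_square algebra_simps)
    done
  then show ?thesis by (simp add: ncz_sq)
qed

lemma kf_eq: "kf y = snd y$Yi * snd y$Zi + snd y$Yj * snd y$Zj + snd y$Yk * snd y$Zk"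
  by (simp add: kf_def YZ_def inner_nvec)

definition Dq :: "idx \<Rightarrow> tpt \<Rightarrow> tpt \<Rightarrow> real" where
  "Dq W y u = (if W \<in> {Zi,Zj,Zk} then snd u $ W else 0)"

definition Dh1 :: "tpt \<Rightarrow> tpt \<Rightarrow> real" where
  "Dh1 y u = (let U = snd y; d = snd u in
     2*(U$Xi*U$Zi + U$Xj*U$Zj)*(d$Xi*U$Zi + U$Xi*d$Zi + d$Xj*U$Zj + U$Xj*d$Zj)
   + 2*(U$Yj*U$Zi - U$Yi*U$Zj)*(d$Yj*U$Zi + U$Yj*d$Zi - d$Yi*U$Zj - U$Yi*d$Zj))"

definition Dh2 :: "tpt \<Rightarrow> tpt \<Rightarrow> real" where
  "Dh2 y u = (let U = snd y; d = snd u;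
     s = (U$Zi)^2 + (U$Zj)^2 + (U$Zk)^2; ds = 2*U$Zi*d$Zi + 2*U$Zj*d$Zj + 2*U$Zk*d$Zk;
     b1 = U$Xi * U$Zj - U$Xj * U$Zi; db1 = d$Xi * U$Zj + U$Xi * d$Zj - d$Xj * U$Zi - U$Xj * d$Zi;
     b2 = U$Zk * (U$Yi * U$Zi + U$Yj * U$Zj) - ((U$Zi)^2 + (U$Zj)^2) * U$Yk;
     db2 = d$Zk * (U$Yi * U$Zi + U$Yj * U$Zj) + U$Zk * (d$Yi * U$Zi + U$Yi * d$Zi + d$Yj * U$Zj + U$Yj * d$Zj)
        - (2*U$Zi*d$Zi + 2*U$Zj*d$Zj) * U$Yk - ((U$Zi)^2 + (U$Zj)^2) * d$Yk
   in ds * b1^2 + 2 * s * b1 * db1 + 2 * b2 * db2)"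

definition Dk :: "tpt \<Rightarrow> tpt \<Rightarrow> real" where
  "Dk y u = (let U = snd y; d = snd u in
     d$Yi * U$Zi + U$Yi * d$Zi + d$Yj * U$Zj + U$Yj * d$Zj + d$Yk * U$Zk + U$Yk * d$Zk)"

lemma dq: "(qf W has_derivative Dq W y) (at y)"
  unfolding qf_eq[abs_def] Dq_def by (cases "W \<in> {Zi,Zj,Zk}") (auto intro!: derivative_eq_intros)

lemma dh1: "(h1 has_derivative Dh1 y) (at y)"
  unfolding h1_eq[abs_def] Dh1_def Let_def
  apply (intro derivative_eq_intros)
  apply (rule refl)+
  apply (simp add: fun_eq_iff algebra_simps)
  done

lemma dh2: "(h2 has_derivative Dh2 y) (at y)"
  unfolding h2_eq[abs_def] Dh2_def Let_def
  apply (intro derivative_eq_intros)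
  apply (rule refl)+
  apply (simp add: fun_eq_iff algebra_simps)
  done

lemma dk: "(kf has_derivative Dk y) (at y)"
  unfolding kf_eq[abs_def] Dk_def Let_def
  apply (intro derivative_eq_intros)
  apply (rule refl)+
  apply (simp add: fun_eq_iff algebra_simps)
  done

definition dd :: "nvec \<Rightarrow> real" where "dd U = U$Zk * ((U$Zi)^2 + (U$Zj)^2 + (U$Zk)^2)"
definition nX :: "idx \<Rightarrow> nvec \<Rightarrow> real" where
  "nX X U = (if X = Xi then (-(U$Zi*U$Zj))*U$Yi + ((U$Zi)^2+(U$Zk)^2)*U$Yj + (-(U$Zj*U$Zk))*U$Yk
     else (-((U$Zj)^2) - (U$Zk)^2)*U$Yi + (U$Zi*U$Zj)*U$Yj + (U$Zi*U$Zk)*U$Yk)"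

lemma ff_eq: "X \<in> {Xi,Xj} \<Longrightarrow> snd y $ Zk \<noteq> 0 \<Longrightarrow>
  ff X y = phi (dd (snd y)) * sin (2*pi*(fst y $ X - nX X (snd y) / dd (snd y)))"
  by (auto simp: ff_def PhiZ_def dd_def nX_def CZ_def Let_def ncz_sq inner_nvec)

definition phid :: "real \<Rightarrow> real" where "phid x = exp (-1/x^2) * (2 / x^3)"

lemma phi_deriv: assumes "x \<noteq> 0" shows "(phi has_real_derivative phid x) (at x)"
proof -
  have "((\<lambda>x. exp (-1/x^2)) has_real_derivative phid x) (at x)"
    using assms by (auto intro!: derivative_eq_intros simp: phid_def field_simps power2_eq_square power3_eq_cube)
  then show ?thesis
    by (rule has_field_derivative_transform_within_open[where S="{x. x \<noteq> 0}"])
       (auto simp: assms phi_def open_Collect_neq)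
qed

lemma phi_comp_deriv:
  assumes "(g has_derivative g') (at y)" "g y \<noteq> 0"
  shows "((\<lambda>z. phi (g z)) has_derivative (\<lambda>u. phid (g y) * g' u)) (at y)"
  using has_derivative_compose[OF assms(1) phi_deriv[OF assms(2), unfolded has_field_derivative_def]] .

definition Ddd :: "nvec \<Rightarrow> nvec \<Rightarrow> real" where
  "Ddd U d = d$Zk * ((U$Zi)^2 + (U$Zj)^2 + (U$Zk)^2) + U$Zk * (2*U$Zi*d$Zi + 2*U$Zj*d$Zj + 2*U$Zk*d$Zk)"
definition DnX :: "idx \<Rightarrow> nvec \<Rightarrow> nvec \<Rightarrow> real" where
  "DnX X U d = (if X = Xi then
      -(d$Zi*U$Zj + U$Zi*d$Zj)*U$Yi - U$Zi*U$Zj*d$Yi + (2*U$Zi*d$Zi + 2*U$Zk*d$Zk)*U$Yj + ((U$Zi)^2+(U$Zk)^2)*d$Yj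
      - (d$Zj*U$Zk + U$Zj*d$Zk)*U$Yk - U$Zj*U$Zk*d$Yk
    else -(2*U$Zj*d$Zj + 2*U$Zk*d$Zk)*U$Yi + (-((U$Zj)^2)-(U$Zk)^2)*d$Yi + (d$Zi*U$Zj + U$Zi*d$Zj)*U$Yj + U$Zi*U$Zj*d$Yj
      + (d$Zi*U$Zk + U$Zi*d$Zk)*U$Yk + U$Zi*U$Zk*d$Yk)"

definition th :: "idx \<Rightarrow> tpt \<Rightarrow> real" where
  "th X y = fst y $ X - nX X (snd y) / dd (snd y)"

definition Dff :: "idx \<Rightarrow> tpt \<Rightarrow> tpt \<Rightarrow> real" where
  "Dff X y u = (if snd y $ Zk = 0 then 0 else
     phid (dd (snd y)) * Ddd (snd y) (snd u) * sin (2*pi*th X y)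
     + phi (dd (snd y)) * (cos (2*pi*th X y) * (2*pi*(fst u $ X
         - (DnX X (snd y) (snd u) * dd (snd y) - nX X (snd y) * Ddd (snd y) (snd u)) / (dd (snd y))^2))))"

lemma dd_nz: assumes "U$Zk \<noteq> 0" shows "dd U \<noteq> 0"
proof -
  have "(U$Zk)^2 > 0" using assms by simp
  then have "(U$Zi)^2 + (U$Zj)^2 + (U$Zk)^2 > 0" by (smt (verit) zero_le_power2)
  then show ?thesis using assms unfolding dd_def by simp
qed

lemma d_dd: "((\<lambda>y. dd (snd y)) has_derivative (\<lambda>u. Ddd (snd y) (snd u))) (at y)"
  unfolding dd_def[abs_def] Ddd_def
  apply (intro derivative_eq_intros)
  apply (rule refl)+
  apply (simp add: fun_eq_iff algebra_simps)
  done

lemma d_nX: "((\<lambda>y. nX X (snd y)) has_derivative (\<lambda>u. DnX X (snd y) (snd u))) (at y)"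
proof (cases "X = Xi")
  case True
  show ?thesis unfolding nX_def[abs_def] DnX_def True
    apply simp
    apply (intro derivative_eq_intros)
    apply (rule refl)+
    apply (simp add: fun_eq_iff algebra_simps)
    done
next
  case False
  show ?thesis unfolding nX_def[abs_def] DnX_def using False
    apply simp
    apply (intro derivative_eq_intros)
    apply (rule refl)+
    apply (simp add: fun_eq_iff algebra_simps)
    done
qed

lemma dff_nz:
  assumes X: "X \<in> {Xi,Xj}" and nz: "snd y $ Zk \<noteq> 0"
  shows "(ff X has_derivative Dff X y) (at y)"
proof -
  have d0: "dd (snd y) \<noteq> 0" using dd_nz nz by blast
  have "((\<lambda>z. phi (dd (snd z)) * sin (2*pi*(fst z $ X - nX X (snd z) / dd (snd z)))) has_derivative Dff X y) (at y)"
    unfolding Dff_def th_def using nz d0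
    apply simp
    apply (rule derivative_eq_intros phi_comp_deriv d_dd d_nX refl | assumption)+
    apply (simp add: fun_eq_iff field_simps power2_eq_square)
    done
  then show ?thesis
    apply (rule has_derivative_transform_within_open[where s="{z. snd z $ Zk \<noteq> 0}"])
    using nz X by (auto simp: ff_eq intro!: open_Collect_neq continuous_intros)
qed

lemma phi_bound: "0 \<le> phi x \<and> phi x \<le> x^2"
proof (cases "x = 0")
  case True then show ?thesis by (simp add: phi_def)
next
  case False
  have p: "x^2 > 0" using False by simp
  have "1 + 1/x^2 \<le> exp (1/x^2)" by (rule exp_ge_add_one_self)
  then have "1/x^2 \<le> exp (1/x^2)" by linarith
  then have "inverse (exp (1/x^2)) \<le> inverse (1/x^2)"
    using p by (intro le_imp_inverse_le) auto
  then have "exp (-1/x^2) \<le> x^2" using p by (simp add: exp_minus)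
  then show ?thesis using False by (simp add: phi_def)
qed

lemma ff_bound: "\<bar>ff X z\<bar> \<le> (dd (snd z))^2"
proof (cases "snd z $ Zk = 0")
  case True then show ?thesis by (simp add: ff_def)
next
  case False
  have h: "\<And>a t::real. \<bar>a * sin t\<bar> \<le> \<bar>a\<bar> * 1" 
  proof -
    fix a t :: real
    have "\<bar>a\<bar> * \<bar>sin t\<bar> \<le> \<bar>a\<bar> * 1" by (rule mult_left_mono[OF abs_sin_le_one]) simp
    then show "\<bar>a * sin t\<bar> \<le> \<bar>a\<bar> * 1" by (simp add: abs_mult)
  qed
  have "\<bar>ff X z\<bar> \<le> \<bar>PhiZ (zproj (snd z))\<bar> * 1"
    using False unfolding ff_def Let_def by (simp add: h del: mult_1_right)
  also have "PhiZ (zproj (snd z)) = phi (dd (snd z))"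
    by (simp add: PhiZ_def dd_def ncz_sq)
  finally show ?thesis using phi_bound[of "dd (snd z)"] by simp
qed

lemma dd_bound: assumes "snd y $ Zk = 0" shows "\<bar>dd (snd z)\<bar> \<le> norm (z - y) * (norm z)^2"
proof -
  have a: "\<bar>snd z $ Zk\<bar> \<le> norm (z - y)"
  proof -
    have "\<bar>snd z $ Zk\<bar> = \<bar>snd (z - y) $ Zk\<bar>" using assms by simp
    also have "\<dots> \<le> norm (snd (z - y))" by (rule component_le_norm_cart)
    also have "\<dots> \<le> norm (z - y)" by (metis norm_snd_le prod.collapse)
    finally show ?thesis .
  qed
  have b: "(snd z$Zi)^2 + (snd z$Zj)^2 + (snd z$Zk)^2 \<le> (norm z)^2"
  proof -
    have "(snd z$Zi)^2 + (snd z$Zj)^2 + (snd z$Zk)^2 \<le> inner (snd z) (snd z)"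
      by (simp add: inner_nvec power2_eq_square)
    also have "\<dots> = (norm (snd z))^2" by (simp add: power2_norm_eq_inner)
    also have "\<dots> \<le> (norm z)^2" by (metis norm_snd_le prod.collapse norm_ge_zero power_mono)
    finally show ?thesis .
  qed
  have "\<bar>dd (snd z)\<bar> = \<bar>snd z $ Zk\<bar> * ((snd z$Zi)^2 + (snd z$Zj)^2 + (snd z$Zk)^2)"
    by (simp add: dd_def abs_mult)
  also have "\<dots> \<le> norm (z - y) * (norm z)^2"
    using a b by (intro mult_mono) auto
  finally show ?thesis .
qed

lemma dff_z:
  assumes z: "snd y $ Zk = 0"
  shows "(ff X has_derivative Dff X y) (at y)"
proof -
  have D0: "Dff X y = (\<lambda>u. 0)" using z by (simp add: Dff_def fun_eq_iff)
  have f0: "ff X y = 0" using z by (simp add: ff_def)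
  have ev: "\<forall>\<^sub>F x in at y. norm (norm (ff X x - ff X y - 0) / norm (x - y)) \<le> norm (x - y) * (norm x)^4"
  proof (rule always_eventually, rule allI)
    fix x
    show "norm (norm (ff X x - ff X y - 0) / norm (x - y)) \<le> norm (x - y) * (norm x)^4"
    proof (cases "x = y")
      case True then show ?thesis by simp
    next
      case False
      then have pos: "norm (x - y) > 0" by simp
      have "\<bar>ff X x\<bar> \<le> (dd (snd x))^2" by (rule ff_bound)
      also have "\<dots> = \<bar>dd (snd x)\<bar>^2" by simp
      also have "\<dots> \<le> (norm (x - y) * (norm x)^2)^2"
        using dd_bound[OF z, of x] by (intro power_mono) auto
      finally have "\<bar>ff X x\<bar> \<le> norm (x - y) * (norm (x - y) * (norm x)^4)"
        by (simp add: power2_eq_square numeral_eq_Suc mult_ac)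
      then show ?thesis using pos f0 by (simp add: divide_le_eq mult.commute)
    qed
  qed
  have lim: "((\<lambda>x. norm (x - y) * (norm x)^4) \<longlongrightarrow> 0) (at y)"
  proof -
    have "((\<lambda>x. norm (x - y) * (norm x)^4) \<longlongrightarrow> norm (y - y) * (norm y)^4) (at y)"
      by (intro tendsto_intros)
    then show ?thesis by simp
  qed
  show ?thesis unfolding D0 has_derivative_iff_norm
    using Lim_null_comparison[OF ev lim] by simp
qed

lemma dff: "X \<in> {Xi,Xj} \<Longrightarrow> (ff X has_derivative Dff X y) (at y)"
  using dff_z dff_nz by blast

definition pbr :: "(tpt \<Rightarrow> real) \<Rightarrow> (tpt \<Rightarrow> real) \<Rightarrow> nvec \<Rightarrow> real" where
  "pbr D E U = inner (gu E) (gw D) - inner (gu D) (gw E) - inner U (brk (gu D) (gu E))"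

lemma pbr_red:
  assumes "gw D $ Zi = 0" "gw D $ Zj = 0" "gw D $ Zk = 0" "gw E $ Zi = 0" "gw E $ Zj = 0" "gw E $ Zk = 0"
  shows "pbr D E U = inner (vproj (gu E)) (gw D) - inner (vproj (gu D)) (gw E) - inner U (brk (vproj (gu D)) (vproj (gu E)))"
  using assms by (simp add: pbr_def inner_nvec brk_def)

definition kap :: "idx \<Rightarrow> tpt \<Rightarrow> real" where
  "kap X y = phi (dd (snd y)) * cos (2*pi*th X y) * (2*pi)"

lemma gw_ff: "gw (Dff X y) $ b = (if snd y $ Zk = 0 then 0 else kap X y * (if b = X then 1 else 0))"
  by (simp add: gw_def Dff_def Ddd_def DnX_def kap_def)

lemma gu_ff: "b \<in> {Xi,Xj,Yi,Yj,Yk} \<Longrightarrow> snd y $ Zk \<noteq> 0 \<Longrightarrow>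
   gu (Dff X y) $ b = - kap X y * DnX X (snd y) (bv b) / dd (snd y)"
  apply (frule dd_nz)
  apply (auto simp add: gu_def Dff_def Ddd_def kap_def field_simps power2_eq_square)
  done

lemma gu_ff0: "snd y $ Zk = 0 \<Longrightarrow> gu (Dff X y) = 0"
  by (simp add: gu_def Dff_def vec_eq_iff)

lemma gw_h[simp]: "gw (Dh1 y) = 0" "gw (Dh2 y) = 0" "gw (Dk y) = 0" "gw (Dq W y) = 0"
  by (simp_all add: gw_def Dh1_def Dh2_def Dk_def Dq_def vec_eq_iff Let_def)

lemma br_fE: assumes E: "gw E = 0" and X: "X \<in> {Xi,Xj}" shows "pbr (Dff X y) E (snd y) = 0"
proof (cases "snd y $ Zk = 0")
  case True then show ?thesis using E by (simp add: pbr_def gu_ff0 gw_ff inner_nvec brk_def)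
next
  case False
  note d = dd_nz[OF False]
  show ?thesis
  proof (cases "X = Xi")
    case True
    show ?thesis
      apply (subst pbr_red)
      using False d E True apply (simp_all add: gw_ff gu_ff inner_nvec brk_def)
      apply (simp add: DnX_def field_simps)
      apply (simp add: dd_def power2_eq_square algebra_simps)
      done
  next
    case nX: False
    then have "X = Xj" using X by auto
    then show ?thesis
      apply (subst pbr_red)
      using False d E apply (simp_all add: gw_ff gu_ff inner_nvec brk_def)
      apply (simp add: DnX_def field_simps)
      apply (simp add: dd_def power2_eq_square algebra_simps)
      done
  qed
qed

lemma br_ff: "pbr (Dff Xi y) (Dff Xj y) (snd y) = 0"
proof (cases "snd y $ Zk = 0")
  case True then show ?thesis by (simp add: pbr_def gu_ff0 gw_ff inner_nvec brk_def)
next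
  case False
  note d = dd_nz[OF False]
  show ?thesis
    apply (subst pbr_red)
    using False d apply (simp_all add: gw_ff gu_ff inner_nvec brk_def)
    apply (simp add: DnX_def field_simps)
    done
qed

lemma pbr_swap: "pbr E D U = - pbr D E U"
  by (simp add: pbr_def inner_nvec brk_def algebra_simps)

lemma pbr_self: "pbr D D U = 0"
  using pbr_swap[of D D U] by simp

lemma br_fE': "gw E = 0 \<Longrightarrow> X \<in> {Xi,Xj} \<Longrightarrow> pbr E (Dff X y) (snd y) = 0"
  using br_fE pbr_swap by (metis neg_equal_0_iff_equal)

lemma br_ff': "pbr (Dff Xj y) (Dff Xi y) (snd y) = 0"
  using br_ff pbr_swap by (metis neg_equal_0_iff_equal)

lemma br_q: "gw E $ W = 0 \<Longrightarrow> W \<in> {Zi,Zj,Zk} \<Longrightarrow> pbr (Dq W y) E U = 0"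
  by (auto simp add: pbr_def gu_def Dq_def inner_nvec brk_def)

lemma br_q': "gw E $ W = 0 \<Longrightarrow> W \<in> {Zi,Zj,Zk} \<Longrightarrow> pbr E (Dq W y) U = 0"
  using br_q pbr_swap by (metis neg_equal_0_iff_equal)

lemma br_h12: "pbr (Dh1 y) (Dh2 y) (snd y) = 0"
  by (simp add: pbr_def gu_def gw_def Dh1_def Dh2_def inner_nvec brk_def Let_def algebra_simps)
lemma br_h1k: "pbr (Dh1 y) (Dk y) (snd y) = 0"
  by (simp add: pbr_def gu_def gw_def Dh1_def Dk_def inner_nvec brk_def Let_def algebra_simps)
lemma br_h2k: "pbr (Dh2 y) (Dk y) (snd y) = 0"
  by (simp add: pbr_def gu_def gw_def Dh2_def Dk_def inner_nvec brk_def Let_def algebra_simps)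
lemma br_h21: "pbr (Dh2 y) (Dh1 y) (snd y) = 0" using br_h12 pbr_swap by (metis neg_equal_0_iff_equal)
lemma br_hk1: "pbr (Dk y) (Dh1 y) (snd y) = 0" using br_h1k pbr_swap by (metis neg_equal_0_iff_equal)
lemma br_hk2: "pbr (Dk y) (Dh2 y) (snd y) = 0" using br_h2k pbr_swap by (metis neg_equal_0_iff_equal)

definition Dfam :: "fidx \<Rightarrow> tpt \<Rightarrow> tpt \<Rightarrow> real" where
  "Dfam a = (case a of QZi \<Rightarrow> Dq Zi | QZj \<Rightarrow> Dq Zj | QZk \<Rightarrow> Dq Zk
     | H1 \<Rightarrow> Dh1 | H2 \<Rightarrow> Dh2 | K \<Rightarrow> Dk | FXi \<Rightarrow> Dff Xi | FXj \<Rightarrow> Dff Xj)"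

lemma dfam: "(fam a has_derivative Dfam a y) (at y)"
  by (cases a) (simp_all add: fam_def Dfam_def dq dh1 dh2 dk dff)

lemma zfam: "gw (Dfam a y) $ Zi = 0 \<and> gw (Dfam a y) $ Zj = 0 \<and> gw (Dfam a y) $ Zk = 0"
  by (cases a) (simp_all add: Dfam_def gw_ff)

lemma brfam: "pbr (Dfam a y) (Dfam b y) (snd y) = 0"
  by (cases a; cases b; simp add: Dfam_def pbr_self br_fE br_fE' br_ff br_ff' br_q br_q' gw_ff
      br_h12 br_h1k br_h2k br_h21 br_hk1 br_hk2)

lemma poisson_part: "poisson_commute_TN (fam a) (fam b)"
  by (rule pc_general[OF dfam dfam zfam zfam]) (use brfam in \<open>simp add: pbr_def\<close>)

definition Sset :: "tpt set" where
  "Sset = {y. snd y $ Zk \<noteq> 0 \<and> snd y$Xi * snd y$Zi + snd y$Xj * snd y$Zj \<noteq> 0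
     \<and> snd y$Xi * snd y$Zj - snd y$Xj * snd y$Zi \<noteq> 0
     \<and> cos (2*pi*th Xi y) \<noteq> 0 \<and> cos (2*pi*th Xj y) \<noteq> 0}"

definition O1 :: "tpt set" where "O1 = {y. snd y $ Zk \<noteq> 0}"

lemma open_O1: "open O1"
  unfolding O1_def by (intro open_Collect_neq continuous_intros)

lemma cont_nX: "continuous_on A (\<lambda>y. nX X (snd y))"
  by (cases "X = Xi"; simp add: nX_def; intro continuous_intros)

lemma cont_dd: "continuous_on A (\<lambda>y::tpt. dd (snd y))"
  unfolding dd_def by (intro continuous_intros)

lemma cont_cos: "continuous_on O1 (\<lambda>y. cos (2*pi*th X y))"
  unfolding th_def
  by (intro continuous_intros cont_nX cont_dd) (auto simp: O1_def dd_nz)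

lemma open_S: "open Sset"
proof -
  have e: "Sset = O1 \<inter> {y. snd y$Xi * snd y$Zi + snd y$Xj * snd y$Zj \<noteq> 0}
     \<inter> {y. snd y$Xi * snd y$Zj - snd y$Xj * snd y$Zi \<noteq> 0}
     \<inter> (O1 \<inter> (\<lambda>y. cos (2*pi*th Xi y)) -` (- {0})) \<inter> (O1 \<inter> (\<lambda>y. cos (2*pi*th Xj y)) -` (- {0}))"
    by (auto simp: Sset_def O1_def)
  have o1: "open (O1 \<inter> (\<lambda>y. cos (2*pi*th X y)) -` (- {0}))" for X
    by (rule continuous_open_preimage[OF cont_cos open_O1]) auto
  show ?thesis unfolding e
    by (intro open_Int open_O1 o1 open_Collect_neq continuous_intros)
qed

lemma kap_nz: "snd y $ Zk \<noteq> 0 \<Longrightarrow> cos (2*pi*th X y) \<noteq> 0 \<Longrightarrow> kap X y \<noteq> 0"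
  using dd_nz[of "snd y"] by (simp add: kap_def phi_def)

lemma indep: assumes y: "y \<in> Sset" shows "wedge_nonzero_at fam y"
  unfolding wedge_nonzero_at_def
proof (intro exI conjI allI impI)
  show "\<And>a. (fam a has_derivative Dfam a y) (at y)" by (rule dfam)
  fix c :: "fidx \<Rightarrow> real"
  assume h: "\<forall>u. (\<Sum>a\<in>UNIV. c a * Dfam a y u) = 0"
  have hu: "\<And>u. c QZi * Dq Zi y u + c QZj * Dq Zj y u + c QZk * Dq Zk y u + c H1 * Dh1 y u + c H2 * Dh2 y u
     + c K * Dk y u + c FXi * Dff Xi y u + c FXj * Dff Xj y u = 0"
  proof -
    fix u
    have "(\<Sum>a\<in>UNIV. c a * Dfam a y u) = 0" using h by blast
    then show "?thesis u" by (simp add: UNIV_fidx Dfam_def add.assoc)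
  qed
  have ck: "snd y $ Zk \<noteq> 0" and A1: "snd y$Xi * snd y$Zi + snd y$Xj * snd y$Zj \<noteq> 0"
    and A3: "snd y$Xi * snd y$Zj - snd y$Xj * snd y$Zi \<noteq> 0"
    and ci: "cos (2*pi*th Xi y) \<noteq> 0" and cj: "cos (2*pi*th Xj y) \<noteq> 0" using y by (auto simp: Sset_def)
  have ki: "kap Xi y \<noteq> 0" using kap_nz ck ci by blast
  have kj: "kap Xj y \<noteq> 0" using kap_nz ck cj by blast
  have Ddd0: "Ddd U 0 = 0" for U by (simp add: Ddd_def)
  have DnX0: "DnX X U 0 = 0" for X U by (simp add: DnX_def)
  have f1: "c FXi = 0"
    using hu[of "(bv Xi, 0)"] ck ki by (simp add: Dq_def Dh1_def Dh2_def Dk_def Dff_def Ddd0 DnX0 Let_def kap_def)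
  have f2: "c FXj = 0"
    using hu[of "(bv Xj, 0)"] ck kj by (simp add: Dq_def Dh1_def Dh2_def Dk_def Dff_def Ddd0 DnX0 Let_def kap_def)
  have s1: "(snd y $ Zi)^2 + (snd y $ Zj)^2 \<noteq> 0"
    using A1 by (auto simp: add_nonneg_eq_0_iff)
  define u1 where "u1 = (0::nvec, (snd y $ Zi) *\<^sub>R bv Xi + (snd y $ Zj) *\<^sub>R bv Xj)"
  have e1: "Dh1 y u1 = 2 * (snd y$Xi * snd y$Zi + snd y$Xj * snd y$Zj) * ((snd y $ Zi)^2 + (snd y $ Zj)^2)"
    by (simp add: u1_def Dh1_def Let_def power2_eq_square algebra_simps)
  have e1': "Dh2 y u1 = 0" "Dk y u1 = 0" "Dq Zi y u1 = 0" "Dq Zj y u1 = 0" "Dq Zk y u1 = 0"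
    by (simp_all add: u1_def Dh2_def Dk_def Dq_def Let_def algebra_simps)
  have "c H1 * Dh1 y u1 = 0" using hu[of u1] f1 f2 by (simp add: e1')
  moreover have "Dh1 y u1 \<noteq> 0" unfolding e1 using A1 s1 by simp
  ultimately have h1: "c H1 = 0" by simp
  have s2: "(snd y $ Zi)^2 + (snd y $ Zj)^2 + (snd y $ Zk)^2 \<noteq> 0"
    using ck by (auto simp: add_nonneg_eq_0_iff)
  define u2 where "u2 = (0::nvec, (snd y $ Zj) *\<^sub>R bv Xi - (snd y $ Zi) *\<^sub>R bv Xj)"
  have e2: "Dh2 y u2 = 2 * ((snd y $ Zi)^2 + (snd y $ Zj)^2 + (snd y $ Zk)^2)
      * (snd y$Xi * snd y$Zj - snd y$Xj * snd y$Zi) * ((snd y $ Zi)^2 + (snd y $ Zj)^2)"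
    by (simp add: u2_def Dh2_def Let_def power2_eq_square algebra_simps)
  have e2': "Dk y u2 = 0" "Dq Zi y u2 = 0" "Dq Zj y u2 = 0" "Dq Zk y u2 = 0"
    by (simp_all add: u2_def Dk_def Dq_def Let_def algebra_simps)
  have "c H2 * Dh2 y u2 = 0" using hu[of u2] f1 f2 h1 by (simp add: e2')
  moreover have "Dh2 y u2 \<noteq> 0" unfolding e2 using A3 s1 s2 by simp
  ultimately have h2: "c H2 = 0" by simp
  have k: "c K = 0"
    using hu[of "(0, bv Yk)"] f1 f2 h1 h2 ck
    by (simp add: Dq_def Dh1_def Dh2_def Dk_def Let_def)
  have q1: "c QZi = 0" using hu[of "(0, bv Zi)"] f1 f2 h1 h2 k by (simp add: Dq_def)
  have q2: "c QZj = 0" using hu[of "(0, bv Zj)"] f1 f2 h1 h2 k by (simp add: Dq_def)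
  have q3: "c QZk = 0" using hu[of "(0, bv Zk)"] f1 f2 h1 h2 k by (simp add: Dq_def)
  fix a show "c a = 0" using f1 f2 h1 h2 k q1 q2 q3 by (cases a) auto
qed

lemma choose_s:
  fixes x ci cj xj d :: real
  assumes ci: "ci \<noteq> 0" and xj: "xj \<noteq> 0" and d: "d > 0"
  shows "\<exists>s\<in>{0, d/2, d}. (x + s)*ci + xj*cj \<noteq> 0 \<and> (x + s)*cj - xj*ci \<noteq> 0"
proof (rule ccontr)
  assume "\<not> ?thesis"
  then have H: "\<And>s. s \<in> {0, d/2, d} \<Longrightarrow> (x + s)*ci + xj*cj = 0 \<or> (x + s)*cj - xj*ci = 0" by blast
  have F: "s1 = s2" if "(x + s1)*ci + xj*cj = 0" "(x + s2)*ci + xj*cj = 0" for s1 s2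
  proof -
    have "(s1 - s2) * ci = ((x + s1)*ci + xj*cj) - ((x + s2)*ci + xj*cj)" by (simp add: algebra_simps)
    then have "(s1 - s2) * ci = 0" using that by simp
    then show ?thesis using ci by simp
  qed
  have G: "s1 = s2" if "(x + s1)*cj - xj*ci = 0" "(x + s2)*cj - xj*ci = 0" for s1 s2
  proof (rule ccontr)
    assume ne: "s1 \<noteq> s2"
    have "(s1 - s2) * cj = ((x + s1)*cj - xj*ci) - ((x + s2)*cj - xj*ci)" by (simp add: algebra_simps)
    then have "(s1 - s2) * cj = 0" using that by simp
    then have "cj = 0" using ne by simp
    then show False using that ci xj by simp
  qed
  have n: "0 \<noteq> d/2" "0 \<noteq> d" "d/2 \<noteq> d" using d by auto
  have a: "(x + 0)*ci + xj*cj = 0 \<or> (x + 0)*cj - xj*ci = 0"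
    "(x + d/2)*ci + xj*cj = 0 \<or> (x + d/2)*cj - xj*ci = 0"
    "(x + d)*ci + xj*cj = 0 \<or> (x + d)*cj - xj*ci = 0" using H[of 0] H[of "d/2"] H[of d] by simp_all
  show False using a n F[of 0 "d/2"] F[of 0 d] F[of "d/2" d] G[of 0 "d/2"] G[of 0 d] G[of "d/2" d] by blast
qed

lemma cos_shift:
  assumes c: "cos (2*pi*a) = 0" and t: "0 < t" "t \<le> 1/8"
  shows "cos (2*pi*(a + t)) \<noteq> 0"
proof -
  have "sin (2*pi*a)^2 = 1" using sin_cos_squared_add[of "2*pi*a"] c by simp
  then have sa: "sin (2*pi*a) \<noteq> 0" by auto
  have "2*pi*t < pi" using t pi_gt_zero by (simp add: field_simps)
  then have st: "sin (2*pi*t) > 0" using t by (intro sin_gt_zero) auto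
  have "cos (2*pi*(a + t)) = cos (2*pi*a) * cos (2*pi*t) - sin (2*pi*a) * sin (2*pi*t)"
    by (simp add: distrib_left cos_add)
  also have "\<dots> = - (sin (2*pi*a) * sin (2*pi*t))" using c by simp
  finally show ?thesis using sa st by simp
qed

lemma norm_bv_add: "norm (a *\<^sub>R bv b + v) \<le> \<bar>a\<bar> + norm v"
proof -
  have "norm (a *\<^sub>R bv b + v) \<le> norm (a *\<^sub>R bv b) + norm v" by (rule norm_triangle_ineq)
  then show ?thesis by (simp add: bv_def)
qed

lemma norm_bv: "norm (a *\<^sub>R bv b) = \<bar>a\<bar>" by (simp add: bv_def)

lemma dense_S: "closure Sset = UNIV"
proof -
  have "\<exists>y'\<in>Sset. dist y' y < e" if e: "e > 0" for y :: tpt and e :: real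
  proof -
    obtain w U where y: "y = (w,U)" by fastforce
    define d where "d = e/8"
    have d: "d > 0" using e by (simp add: d_def)
    define a1 where "a1 = (if U$Zk \<noteq> 0 then 0 else d)"
    define a2 where "a2 = (if U$Zi \<noteq> 0 then 0 else d)"
    define a3 where "a3 = (if U$Xj \<noteq> 0 then 0 else d)"
    define U1 where "U1 = U + a1 *\<^sub>R bv Zk + a2 *\<^sub>R bv Zi + a3 *\<^sub>R bv Xj"
    have U1c: "U1$Zk \<noteq> 0" "U1$Zi \<noteq> 0" "U1$Xj \<noteq> 0" using d by (auto simp: U1_def a1_def a2_def a3_def)
    obtain s where s: "s \<in> {0, d/2, d}" "(U1$Xi + s)*U1$Zi + U1$Xj*U1$Zj \<noteq> 0" "(U1$Xi + s)*U1$Zj - U1$Xj*U1$Zi \<noteq> 0"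
      using choose_s[OF U1c(2) U1c(3) d, of "U1$Xi" "U1$Zj"] by blast
    define U2 where "U2 = U1 + s *\<^sub>R bv Xi"
    define t where "t = min d (1/8)"
    have t: "0 < t" "t \<le> 1/8" "t \<le> d" using d by (auto simp: t_def)
    define ti where "ti = (if cos (2*pi*th Xi (w,U2)) \<noteq> 0 then 0 else t)"
    define tj where "tj = (if cos (2*pi*th Xj (w,U2)) \<noteq> 0 then 0 else t)"
    define y' where "y' = (w + ti *\<^sub>R bv Xi + tj *\<^sub>R bv Xj, U2)"
    have thi: "th Xi y' = th Xi (w,U2) + ti" by (simp add: th_def y'_def)
    have thj: "th Xj y' = th Xj (w,U2) + tj" by (simp add: th_def y'_def)
    have ci: "cos (2*pi*th Xi y') \<noteq> 0"
    proof (cases "cos (2*pi*th Xi (w,U2)) = 0")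
      case True then show ?thesis using cos_shift[OF True t(1,2)] by (simp add: thi ti_def)
    next
      case False then show ?thesis by (simp add: thi ti_def)
    qed
    have cj: "cos (2*pi*th Xj y') \<noteq> 0"
    proof (cases "cos (2*pi*th Xj (w,U2)) = 0")
      case True then show ?thesis using cos_shift[OF True t(1,2)] by (simp add: thj tj_def)
    next
      case False then show ?thesis by (simp add: thj tj_def)
    qed
    have inS: "y' \<in> Sset"
      using U1c s(2,3) ci cj by (simp add: Sset_def y'_def U2_def algebra_simps)
    have n1: "norm (ti *\<^sub>R bv Xi + tj *\<^sub>R bv Xj) \<le> 2*d"
    proof -
      have "norm (ti *\<^sub>R bv Xi + tj *\<^sub>R bv Xj) \<le> \<bar>ti\<bar> + norm (tj *\<^sub>R bv Xj)" by (rule norm_bv_add)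
      also have "\<dots> \<le> 2*d" using t d by (simp add: bv_def ti_def tj_def)
      finally show ?thesis .
    qed
    have n2: "norm (U2 - U) \<le> 4*d"
    proof -
      have "U2 - U = a1 *\<^sub>R bv Zk + (a2 *\<^sub>R bv Zi + (a3 *\<^sub>R bv Xj + s *\<^sub>R bv Xi))"
        by (simp add: U2_def U1_def algebra_simps)
      also have "norm \<dots> \<le> \<bar>a1\<bar> + (\<bar>a2\<bar> + (\<bar>a3\<bar> + \<bar>s\<bar>))"
        by (intro order_trans[OF norm_bv_add] add_left_mono) (simp add: bv_def)
      also have "\<dots> \<le> 4*d" using s(1) d by (auto simp: a1_def a2_def a3_def)
      finally show ?thesis .
    qed
    have "dist y' y = norm (ti *\<^sub>R bv Xi + tj *\<^sub>R bv Xj, U2 - U)"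
      by (simp add: dist_norm y y'_def)
    also have "\<dots> \<le> norm (ti *\<^sub>R bv Xi + tj *\<^sub>R bv Xj) + norm (U2 - U)" by (rule norm_Pair_le)
    also have "\<dots> < e" using n1 n2 d by (simp add: d_def)
    finally show ?thesis using inS by blast
  qed
  then show ?thesis by (auto simp: closure_approachable)
qed

theorem lemma4p5:
  shows "(\<exists>S :: tpt set. open S \<and> closure S = UNIV \<and> (\<forall>y\<in>S. wedge_nonzero_at fam y))
       \<and> (\<forall>a b. poisson_commute_TN (fam a) (fam b))"
proof
  show "\<exists>S :: tpt set. open S \<and> closure S = UNIV \<and> (\<forall>y\<in>S. wedge_nonzero_at fam y)"
    using open_S dense_S indep by blast
  show "\<forall>a b. poisson_commute_TN (fam a) (fam b)" using poisson_part by blast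
qed

end
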